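(* Let $L\in\mathbb{R}^{k\times k}$ be any task loss matrix with nonnegative entries, let $\Phi_{quad}(f,y)=\frac{1}{2k}\|f+L(:,y)\|_2^2$ be its quadratic surrogate, and let $\mathcal{F}\subseteq\mathbb{R}^k$ be a subspace containing the column space of $L$. Then for all $\varepsilon\ge0$, $$H_{\Phi_{quad},L,\mathcal{F}}(\varepsilon)\ \ge\ \frac{\varepsilon^2}{2k\max_{i\ne j}\|P_{\mathcal{F}}\Delta_{ij}\|_2^2}\ \ge\ \frac{\varepsilon^2}{4k},$$ where $P_{\mathcal{F}}$ is the orthogonal projection onto $\mathcal{F}$, $\Delta_{ij}=e_i-e_j$, and $e_c$ is the $c$-th standard basis vector of $\mathbb{R}^k$.
   Context: Labels are $\{1,\dots,k\}$; $L(:,y)$ denotes the $y$-th column of $L$. $\mathrm{pred}(f)$ is the smallest index maximizing $f_c$. For $q\in\Delta_k$ (probability simplex): $\ell(f,q)=\sum_c q_cL(\mathrm{pred}(f),c)$, $\phi(f,q)=\sum_c q_c\Phi(f,c)$, $\delta\ell(f,q)=\ell(f,q)-\inf_{\hat f\in\mathcal{F}}\ell(\hat f,q)$, $\delta\phi(f,q)=\phi(f,q)-\inf_{\hat f\in\mathcal{F}}\phi(\hat f,q)$. Calibration function: $H_{\Phi,L,\mathcal{F}}(\varepsilon)=\inf\{\delta\phi(f,q):f\in\mathcal{F},q\in\Delta_k,\delta\ell(f,q)\ge\varepsilon\}$, $+\infty$ if the feasible set is empty. Convention $1/0=+\infty$. *)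

theory Defs
  imports "HOL-Analysis.Analysis"
begin

text \<open>Labels are the elements of a finite linearly ordered type 'n (k = CARD('n)).
  Score vectors are elements of real^'n; the loss matrix is L :: real^'n^'n with
  L$i$j = L(i,j), so column y L = L(:,y).\<close>

definition pred :: "real^('n::{finite,linorder}) \<Rightarrow> ('n::{finite,linorder})" where
  "pred f = (LEAST c. \<forall>d. f$d \<le> f$c)"

definition prob_simplex :: "(real^'n) set" where
  "prob_simplex = {q. (\<forall>c. 0 \<le> q$c) \<and> sum (\<lambda>c. q$c) UNIV = 1}"

definition task_risk :: "real^('n::{finite,linorder})^('n::{finite,linorder}) \<Rightarrow> real^('n::{finite,linorder}) \<Rightarrow> real^('n::{finite,linorder}) \<Rightarrow> real" where
  "task_risk L f q = (\<Sum>c\<in>UNIV. q$c * L$(pred f)$c)"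

definition surr_risk :: "(real^'n \<Rightarrow> 'n \<Rightarrow> real) \<Rightarrow> real^'n \<Rightarrow> real^'n \<Rightarrow> real" where
  "surr_risk Phi f q = (\<Sum>c\<in>UNIV. q$c * Phi f c)"

definition excess_task :: "real^('n::{finite,linorder})^('n::{finite,linorder}) \<Rightarrow> (real^('n::{finite,linorder})) set \<Rightarrow> real^('n::{finite,linorder}) \<Rightarrow> real^('n::{finite,linorder}) \<Rightarrow> real" where
  "excess_task L F f q = task_risk L f q - (INF g\<in>F. task_risk L g q)"

definition excess_surr :: "(real^'n \<Rightarrow> 'n \<Rightarrow> real) \<Rightarrow> (real^'n) set \<Rightarrow> real^'n \<Rightarrow> real^'n \<Rightarrow> real" where
  "excess_surr Phi F f q = surr_risk Phi f q - (INF g\<in>F. surr_risk Phi g q)"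

text \<open>Calibration function, valued in extended reals; Inf of the empty set is +\<infinity>.\<close>
definition calib :: "(real^('n::{finite,linorder}) \<Rightarrow> ('n::{finite,linorder}) \<Rightarrow> real) \<Rightarrow> real^('n::{finite,linorder})^('n::{finite,linorder}) \<Rightarrow> (real^('n::{finite,linorder})) set \<Rightarrow> real \<Rightarrow> ereal" where
  "calib Phi L F \<epsilon> = Inf {ereal (excess_surr Phi F f q) | f q.
      f \<in> F \<and> q \<in> prob_simplex \<and> excess_task L F f q \<ge> \<epsilon>}"

definition phi_quad :: "real^'n^'n \<Rightarrow> real^'n \<Rightarrow> 'n \<Rightarrow> real" where
  "phi_quad L f y = (1 / (2 * real CARD('n))) * (norm (f + column y L))\<^sup>2"

definition orth_proj :: "(real^'n) set \<Rightarrow> real^'n \<Rightarrow> real^'n" where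
  "orth_proj F v = (THE p. p \<in> F \<and> (\<forall>w\<in>F. (v - p) \<bullet> w = 0))"

end

theory Submission
  imports Defs
begin

lemma orth_proj_prop:
  fixes F :: "(real^'n) set"
  assumes "subspace F"
  shows "orth_proj F v \<in> F \<and> (\<forall>w\<in>F. (v - orth_proj F v) \<bullet> w = 0)"
proof -
  have ex: "\<exists>p. p \<in> F \<and> (\<forall>w\<in>F. (v - p) \<bullet> w = 0)"
  proof -
    obtain y z where "y \<in> span F" "\<And>w. w \<in> span F \<Longrightarrow> orthogonal z w" "v = y + z"
      using orthogonal_subspace_decomp_exists[of F v] by metis
    moreover have "span F = F" using assms by (intro span_subspace) (auto simp: span_superset)
    ultimately show ?thesis
      by (intro exI[of _ y]) (auto simp: orthogonal_def span_base)
  qed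
  have uni: "p = p'" if "p \<in> F \<and> (\<forall>w\<in>F. (v - p) \<bullet> w = 0)" "p' \<in> F \<and> (\<forall>w\<in>F. (v - p') \<bullet> w = 0)" for p p'
  proof -
    have d: "p - p' \<in> F" using that assms by (simp add: subspace_diff)
    have "(v - p') \<bullet> (p - p') - (v - p) \<bullet> (p - p') = 0" using that d by simp
    hence "(p - p') \<bullet> (p - p') = 0" by (simp add: inner_diff_left)
    thus ?thesis by simp
  qed
  show ?thesis unfolding orth_proj_def
    by (rule theI'[of "\<lambda>p. p \<in> F \<and> (\<forall>w\<in>F. (v - p) \<bullet> w = 0)"]) (use ex uni in blast)
qed

lemma orth_proj_norm_le:
  fixes F :: "(real^'n) set"
  assumes "subspace F"
  shows "norm (orth_proj F v) \<le> norm v"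
proof -
  let ?p = "orth_proj F v"
  have "(v - ?p) \<bullet> ?p = 0" using orth_proj_prop[OF assms] by blast
  hence "?p \<bullet> ?p = v \<bullet> ?p" by (simp add: inner_diff_left)
  also have "\<dots> \<le> norm v * norm ?p" by (rule norm_cauchy_schwarz)
  finally have "norm ?p * norm ?p \<le> norm v * norm ?p" by (simp add: norm_eq_sqrt_inner)
  thus ?thesis by (cases "norm ?p = 0") (auto simp: mult_le_cancel_right)
qed

lemma norm_delta: "i \<noteq> j \<Longrightarrow> (norm (axis i (1::real) - axis j 1))\<^sup>2 = 2"
  by (simp add: power2_norm_eq_inner inner_diff_left inner_diff_right inner_axis_axis)

lemma pred_max:
  fixes f :: "real^('n::{finite,linorder})"
  shows "\<forall>d. f$d \<le> f$(pred f)"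
proof -
  have "Max (range (\<lambda>d. f$d)) \<in> range (\<lambda>d. f$d)" by (rule Max_in) auto
  then obtain c where c: "f$c = Max (range (\<lambda>d. f$d))" by (metis imageE)
  have "\<forall>d. f$d \<le> f$c" unfolding c by (auto intro: Max_ge)
  hence "(LEAST c. \<forall>d. f$d \<le> f$c) = Min {c. \<forall>d. f$d \<le> f$c}"
    by (intro Least_Min) auto
  moreover have "Min {c. \<forall>d. f$d \<le> f$c} \<in> {c. \<forall>d. f$d \<le> f$c}"
    using \<open>\<forall>d. f$d \<le> f$c\<close> by (intro Min_in) auto
  ultimately show ?thesis unfolding pred_def by simp
qed


lemma vq_sum:
  fixes L :: "real^'n^'n"
  shows "(\<chi> i. \<Sum>c\<in>UNIV. q$c * L$i$c) = (\<Sum>c\<in>UNIV. q$c *\<^sub>R column c L)"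
  by (simp add: vec_eq_iff sum_component column_def)

lemma surr_diff:
  fixes L :: "real^'n^'n" and q f v :: "real^'n"
  assumes "sum (\<lambda>c. q$c) UNIV = 1" and v: "v = (\<Sum>c\<in>UNIV. q$c *\<^sub>R column c L)"
  shows "surr_risk (phi_quad L) f q - surr_risk (phi_quad L) (-v) q
     = (norm (f + v))\<^sup>2 / (2 * real CARD('n))"
proof -
  let ?a = "\<lambda>c. column c L"
  have inner_v: "x \<bullet> v = (\<Sum>c\<in>UNIV. q$c * (x \<bullet> ?a c))" for x
    unfolding v by (simp add: inner_sum_right)
  have pt: "(norm (f + ?a c))\<^sup>2 - (norm (-v + ?a c))\<^sup>2 = f \<bullet> f + 2 * (f \<bullet> ?a c) - v \<bullet> v + 2 * (v \<bullet> ?a c)" for c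
    by (simp add: power2_norm_eq_inner inner_add_left inner_add_right inner_diff_left inner_diff_right inner_commute)
  have "surr_risk (phi_quad L) f q - surr_risk (phi_quad L) (-v) q
      = (1 / (2 * real CARD('n))) * (\<Sum>c\<in>UNIV. q$c * ((norm (f + ?a c))\<^sup>2 - (norm (-v + ?a c))\<^sup>2))"
    unfolding surr_risk_def phi_quad_def
    by (simp add: sum_subtractf[symmetric] sum_distrib_left algebra_simps)
  also have "(\<Sum>c\<in>UNIV. q$c * ((norm (f + ?a c))\<^sup>2 - (norm (-v + ?a c))\<^sup>2))
     = (\<Sum>c\<in>UNIV. q$c) * (f \<bullet> f - v \<bullet> v) + 2 * (\<Sum>c\<in>UNIV. q$c * (f \<bullet> ?a c)) + 2 * (\<Sum>c\<in>UNIV. q$c * (v \<bullet> ?a c))"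
  proof -
    have "\<And>c. q$c * ((norm (f + ?a c))\<^sup>2 - (norm (-v + ?a c))\<^sup>2)
        = q$c * (f \<bullet> f - v \<bullet> v) + 2 * (q$c * (f \<bullet> ?a c)) + 2 * (q$c * (v \<bullet> ?a c))"
      unfolding pt by (simp add: algebra_simps)
    hence "(\<Sum>c\<in>UNIV. q$c * ((norm (f + ?a c))\<^sup>2 - (norm (-v + ?a c))\<^sup>2))
       = (\<Sum>c\<in>UNIV. q$c * (f \<bullet> f - v \<bullet> v) + 2 * (q$c * (f \<bullet> ?a c)) + 2 * (q$c * (v \<bullet> ?a c)))"
      by simp
    also have "\<dots> = (\<Sum>c\<in>UNIV. q$c * (f \<bullet> f - v \<bullet> v)) + (\<Sum>c\<in>UNIV. 2 * (q$c * (f \<bullet> ?a c))) + (\<Sum>c\<in>UNIV. 2 * (q$c * (v \<bullet> ?a c)))"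
      by (simp add: sum.distrib)
    finally show ?thesis by (simp add: sum_distrib_left[symmetric] sum_distrib_right[symmetric])
  qed
  also have "\<dots> = (norm (f + v))\<^sup>2"
    using assms(1) by (simp add: inner_v[symmetric] power2_norm_eq_inner inner_add_left inner_add_right inner_commute)
  finally show ?thesis by simp
qed

lemma et_le:
  assumes "F \<noteq> {}" "\<And>g. g \<in> F \<Longrightarrow> task_risk L h q \<le> task_risk L g q"
  shows "excess_task L F f q \<le> task_risk L f q - task_risk L h q"
proof -
  have "task_risk L h q \<le> (INF g\<in>F. task_risk L g q)" using assms by (rule cINF_greatest)
  thus ?thesis unfolding excess_task_def by simp
qed

lemma key:
  fixes L :: "real^('n::{finite,linorder})^('n::{finite,linorder})" and F :: "(real^('n::{finite,linorder})) set" and \<epsilon> :: real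
  assumes F: "subspace F" and col: "span (columns L) \<subseteq> F"
    and fF: "f \<in> F" and q: "q \<in> prob_simplex" and eps: "\<epsilon> \<le> excess_task L F f q" and e0: "0 \<le> \<epsilon>"
    and card: "CARD('n) \<ge> 2"
  shows "\<epsilon>\<^sup>2 \<le> (2 * real CARD('n) * excess_surr (phi_quad L) F f q) *
              Max {(norm (orth_proj F (axis i 1 - axis j 1)))\<^sup>2 | i j. i \<noteq> j}"
    and "0 \<le> excess_surr (phi_quad L) F f q"
proof -
  define M where "M = Max {(norm (orth_proj F (axis i 1 - axis j 1)))\<^sup>2 | i j. i \<noteq> (j::'n)}"
  let ?S = "{(norm (orth_proj F (axis i 1 - axis j 1)))\<^sup>2 | i j. i \<noteq> (j::'n)}"
  have finS: "finite ?S"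
  proof (rule finite_subset)
    show "?S \<subseteq> (\<lambda>(i,j). (norm (orth_proj F (axis i 1 - axis j 1)))\<^sup>2) ` UNIV" by auto
  qed auto
  have Mge: "x \<in> ?S \<Longrightarrow> x \<le> M" for x unfolding M_def using finS by (rule Max_ge)
  obtain i0 j0 :: 'n where "i0 \<noteq> j0" 
  proof -
    have "\<exists>i j::'n. i \<noteq> j"
    proof (rule ccontr)
      assume "\<not> (\<exists>i j::'n. i \<noteq> j)"
      hence "(UNIV::'n set) = {undefined}" by auto
      hence "CARD('n) = card {undefined::'n}" by (rule arg_cong)
      hence "CARD('n) = 1" by (simp only: card_1_singleton_iff) simp
      thus False using card by simp
    qed
    thus ?thesis using that by blast
  qed
  hence "(norm (orth_proj F (axis i0 1 - axis j0 1)))\<^sup>2 \<in> ?S" by blast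
  hence M0: "0 \<le> M" using Mge by (meson order_trans zero_le_power2)
  have qs: "\<forall>c. 0 \<le> q$c" "sum (\<lambda>c. q$c) UNIV = 1" using q unfolding prob_simplex_def by auto
  define v where "v = (\<Sum>c\<in>UNIV. q$c *\<^sub>R column c L)"
  have vF: "v \<in> F" unfolding v_def
    by (rule subsetD[OF col], intro span_sum span_scale span_base) (auto simp: columns_def)
  have tr: "task_risk L g q = v $ pred g" for g
    unfolding task_risk_def v_def by (simp add: sum_component column_def mult.commute)
  define i where "i = pred f"
  define j where "j = pred (-v)"
  have bdd: "bdd_below ((\<lambda>g. task_risk L g q) ` F)"
    by (rule bdd_belowI[of _ "Min (range (\<lambda>c. v$c))"]) (auto simp: tr intro: Min_le)
  have "-v \<in> F" using vF F by (simp add: subspace_neg)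
  have "\<epsilon> \<le> task_risk L f q - task_risk L (-v) q"
  proof (rule order_trans[OF eps et_le])
    show "F \<noteq> {}" using \<open>-v \<in> F\<close> by blast
    fix g assume "g \<in> F"
    have "\<forall>d. (-v)$d \<le> (-v)$(pred (-v))" by (rule pred_max)
    thus "task_risk L (-v) q \<le> task_risk L g q" unfolding tr by simp
  qed
  hence e1: "\<epsilon> \<le> v$i - v$j" unfolding i_def j_def tr .
  have fij: "f$j \<le> f$i" unfolding i_def using pred_max by blast
  define h where "h = f + v"
  have hF: "h \<in> F" unfolding h_def using fF vF F by (simp add: subspace_add)
  have e2: "\<epsilon> \<le> h$i - h$j" using e1 fij unfolding h_def by simp
  have bdd2: "bdd_below ((\<lambda>g. surr_risk (phi_quad L) g q) ` F)"
    by (rule bdd_belowI[of _ 0]) (auto simp: surr_risk_def phi_quad_def qs intro!: sum_nonneg)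
  have "(INF g\<in>F. surr_risk (phi_quad L) g q) \<le> surr_risk (phi_quad L) (-v) q"
    using bdd2 vF F by (intro cINF_lower) (auto simp: subspace_neg)
  hence ex: "(norm h)\<^sup>2 / (2 * real CARD('n)) \<le> excess_surr (phi_quad L) F f q"
    using surr_diff[OF qs(2) v_def, of f] unfolding excess_surr_def h_def by simp
  show ex0: "0 \<le> excess_surr (phi_quad L) F f q"
    by (rule order_trans[OF _ ex]) simp
  have kpos: "0 < real CARD('n)" by simp
  have hk: "(norm h)\<^sup>2 \<le> 2 * real CARD('n) * excess_surr (phi_quad L) F f q"
    using ex kpos by (simp add: field_simps)
  show "\<epsilon>\<^sup>2 \<le> (2 * real CARD('n) * excess_surr (phi_quad L) F f q) * Max ?S"
  proof (cases "i = j")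
    case True
    hence "\<epsilon> = 0" using e2 e0 by simp
    thus ?thesis using ex0 M0 unfolding M_def by simp
  next
    case False
    define p where "p = orth_proj F (axis i 1 - axis j 1)"
    have pp: "\<forall>w\<in>F. (axis i 1 - axis j 1 - p) \<bullet> w = 0" unfolding p_def using orth_proj_prop[OF F] by blast
    have "h \<bullet> (axis i 1 - axis j 1) = h$i - h$j" by (simp add: inner_diff_right inner_axis)
    moreover have "(axis i 1 - axis j 1) \<bullet> h = p \<bullet> h" using pp hF by (simp add: inner_diff_left)
    ultimately have "\<epsilon> \<le> p \<bullet> h" using e2 by (simp add: inner_commute)
    also have "\<dots> \<le> norm p * norm h" by (rule norm_cauchy_schwarz)
    finally have "\<epsilon>\<^sup>2 \<le> (norm p * norm h)\<^sup>2" using e0 by (intro power_mono) auto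
    also have "\<dots> = (norm p)\<^sup>2 * (norm h)\<^sup>2" by (simp add: power_mult_distrib)
    also have "\<dots> \<le> M * (2 * real CARD('n) * excess_surr (phi_quad L) F f q)"
    proof (rule mult_mono)
      show "(norm p)\<^sup>2 \<le> M" using False unfolding p_def by (intro Mge) blast
    qed (use hk M0 in auto)
    finally show ?thesis unfolding M_def by (simp add: mult.commute)
  qed
qed


lemma ereal_div_aux: "r \<noteq> 0 \<Longrightarrow> ereal a * inverse (ereal r) = ereal (a / r)"
  by (simp only: inverse_ereal.simps if_False times_ereal.simps divide_inverse if_not_P)

lemma ereal_zero_mult_aux: "(e::real) = 0 \<Longrightarrow> ereal (e\<^sup>2) * (y::ereal) = 0" by simp
lemma ereal_nonneg_aux: "0 \<le> (e::real) \<Longrightarrow> (0::ereal) \<le> ereal e" by simp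
lemma ereal_zdiv_aux: "(e::real) = 0 \<Longrightarrow> ereal (e\<^sup>2 / z) = 0" by simp

lemma ereal_inf_aux: "0 < (a::real) \<Longrightarrow> ereal a * inverse (ereal 0) = \<infinity>" by simp

theorem theorem7:
  fixes L :: "real^('n::{finite,linorder})^('n::{finite,linorder})" and F :: "(real^('n::{finite,linorder})) set" and \<epsilon> :: real
  assumes "CARD('n) \<ge> 2"
    and "\<forall>i j. 0 \<le> L$i$j"
    and "subspace F"
    and "span (columns L) \<subseteq> F"
    and "0 \<le> \<epsilon>"
  shows "calib (phi_quad L) L F \<epsilon> \<ge>
           ereal (\<epsilon>\<^sup>2) * inverse (ereal (2 * real CARD('n) *
              Max {(norm (orth_proj F (axis i 1 - axis j 1)))\<^sup>2 | i j. i \<noteq> j}))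
       \<and> ereal (\<epsilon>\<^sup>2) * inverse (ereal (2 * real CARD('n) *
              Max {(norm (orth_proj F (axis i 1 - axis j 1)))\<^sup>2 | i j. i \<noteq> j}))
           \<ge> ereal (\<epsilon>\<^sup>2 / (4 * real CARD('n)))"
proof -
  let ?S = "{(norm (orth_proj F (axis i 1 - axis j 1)))\<^sup>2 | i j. i \<noteq> (j::'n)}"
  define M where "M = Max ?S"
  define k where "k = real CARD('n)"
  have kpos: "0 < k" unfolding k_def by simp
  have finS: "finite ?S"
  proof (rule finite_subset)
    show "?S \<subseteq> (\<lambda>(i,j). (norm (orth_proj F (axis i 1 - axis j 1)))\<^sup>2) ` UNIV" by auto
  qed auto
  obtain i0 j0 :: 'n where ij0: "i0 \<noteq> j0" 
  proof -
    have "\<exists>i j::'n. i \<noteq> j"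
    proof (rule ccontr)
      assume "\<not> (\<exists>i j::'n. i \<noteq> j)"
      hence "(UNIV::'n set) = {undefined}" by auto
      hence "CARD('n) = card {undefined::'n}" by (rule arg_cong)
      hence "CARD('n) = 1" by (simp only: card_1_singleton_iff) simp
      thus False using assms(1) by simp
    qed
    thus ?thesis using that by blast
  qed
  have neS: "?S \<noteq> {}" using ij0 by blast
  have "(norm (orth_proj F (axis i0 1 - axis j0 1)))\<^sup>2 \<in> ?S" using ij0 by blast
  hence "(norm (orth_proj F (axis i0 1 - axis j0 1)))\<^sup>2 \<le> M" unfolding M_def using finS by (intro Max_ge)
  hence M0: "0 \<le> M" by (meson order_trans zero_le_power2)
  have M2: "M \<le> 2" unfolding M_def
  proof (subst Max_le_iff[OF finS neS], safe)
    fix i j :: 'n assume "i \<noteq> j"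
    have "norm (orth_proj F (axis i 1 - axis j 1)) \<le> norm (axis i (1::real) - axis j 1)"
      by (rule orth_proj_norm_le[OF assms(3)])
    hence "(norm (orth_proj F (axis i 1 - axis j 1)))\<^sup>2 \<le> (norm (axis i (1::real) - axis j 1))\<^sup>2"
      by (intro power_mono) auto
    thus "(norm (orth_proj F (axis i 1 - axis j 1)))\<^sup>2 \<le> 2" using norm_delta[OF \<open>i \<noteq> j\<close>] by simp
  qed
  define X where "X = ereal (\<epsilon>\<^sup>2) * inverse (ereal (2 * k * M))"
  have part1: "X \<le> calib (phi_quad L) L F \<epsilon>"
    unfolding calib_def
  proof (rule Inf_greatest, clarify)
    fix f q assume fq: "f \<in> F" "q \<in> prob_simplex" "\<epsilon> \<le> excess_task L F f q"
    note K = key[OF assms(3) assms(4) fq assms(5) assms(1)]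
    let ?e = "excess_surr (phi_quad L) F f q"
    show "X \<le> ereal ?e"
    proof (cases "M = 0")
      case True
      have "Max ?S = 0" using True unfolding M_def .
      hence "\<epsilon>\<^sup>2 \<le> 0" using K(1) by (simp only: mult_zero_right)
      hence "\<epsilon> = 0" by simp
      hence "X = 0" unfolding X_def by (rule ereal_zero_mult_aux)
      thus ?thesis using ereal_nonneg_aux[OF K(2)] by (simp only:)
    next
      case False
      hence Mp: "0 < M" using M0 by simp
      have "X = ereal (\<epsilon>\<^sup>2 / (2 * k * M))" unfolding X_def using Mp kpos
        by (intro ereal_div_aux) simp
      moreover have "\<epsilon>\<^sup>2 / (2 * k * M) \<le> ?e"
      proof -
        have "\<epsilon>\<^sup>2 \<le> ?e * (2 * k * M)"
          using K(1) unfolding M_def[symmetric] k_def[symmetric] by (simp only: mult_ac)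
        thus ?thesis using Mp kpos by (simp add: divide_le_eq)
      qed
      ultimately show ?thesis by simp
    qed
  qed
  have part2: "ereal (\<epsilon>\<^sup>2 / (4 * k)) \<le> X"
  proof (cases "M = 0")
    case True
    show ?thesis
    proof (cases "\<epsilon> = 0")
      case True
      hence "X = 0" unfolding X_def by (rule ereal_zero_mult_aux)
      thus ?thesis using ereal_zdiv_aux[OF True] by (simp only: order_refl)
    next
      case False
      hence "0 < \<epsilon>\<^sup>2" by simp
      hence "X = \<infinity>" unfolding X_def using \<open>M = 0\<close> by (simp only: mult_zero_right ereal_inf_aux)
      thus ?thesis by simp
    qed
  next
    case False
    hence Mp: "0 < M" using M0 by simp
    have "X = ereal (\<epsilon>\<^sup>2 / (2 * k * M))" unfolding X_def using Mp kpos
      by (intro ereal_div_aux) simp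
    moreover have "\<epsilon>\<^sup>2 / (4 * k) \<le> \<epsilon>\<^sup>2 / (2 * k * M)"
    proof (rule divide_left_mono)
      show "2 * k * M \<le> 4 * k" using M2 kpos by simp
      show "0 < 4 * k * (2 * k * M)" using Mp kpos by simp
    qed simp
    ultimately show ?thesis by simp
  qed
  show ?thesis using part1 part2 unfolding X_def M_def k_def by (intro conjI)
qed

end
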